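(* Let $A\in\mathbb{C}^{n\times n}$, $B\in\mathbb{C}^{n\times m}$, $C\in\mathbb{C}^{p\times n}$, let $j\ge 1$, and let $\mathcal{R}(X):=A^HX+XA+C^HC-XBB^HX$. Suppose $A^HV_{j+1}\underline{K}_j=V_{j+1}\underline{H}_j$ is an orthonormal block rational Arnoldi decomposition (as defined in the context) with $V_{j+1}\in\mathbb{C}^{n\times (j+1)p}$, $\underline{K}_j,\underline{H}_j\in\mathbb{C}^{(j+1)p\times jp}$, where $\underline{K}_j$ has full column rank $jp$, and let $\tilde C\in\mathbb{C}^{(j+1)p\times p}$ satisfy $C^H=V_{j+1}\tilde C$. Let $\underline{L}_j\in\mathbb{C}^{(j+1)p\times jp}$ be such that $\underline{L}_j^H\underline{K}_j$ is nonsingular. Define $$A_j=\underline{H}_j^H\underline{L}_j(\underline{K}_j^H\underline{L}_j)^{-1},\quad B_j=\underline{K}_j^HV_{j+1}^HB,\quad C_j=\tilde C^H\underline{L}_j(\underline{K}_j^H\underline{L}_j)^{-1},$$ let $Y_j=Y_j^H\in\mathbb{C}^{jp\times jp}$ be a Hermitian solution of $A_j^HY_j+Y_jA_j+C_j^HC_j-Y_jB_jB_j^HY_j=0$, and set $X_j=V_{j+1}\underline{K}_jY_j\underline{K}_j^HV_{j+1}^H$. Let $U\in\mathbb{C}^{(j+1)p\times p}$ be a matrix whose columns form a basis of $\operatorname{range}(\underline{L}_j)^\perp$ and $W\in\mathbb{C}^{(j+1)p\times p}$ a matrix whose columns form a basis of $\operatorname{range}(\underline{K}_j)^\perp$ (orthogonal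 complements in $\mathbb{C}^{(j+1)p}$). Then $W^HU$ is nonsingular; define $$T=\underline{K}_jY_j\underline{H}_j^HW(U^HW)^{-1}+\bigl(\tilde C-\tfrac12 U(W^HU)^{-1}W^H\tilde C\bigr)\tilde C^HW(U^HW)^{-1}\in\mathbb{C}^{(j+1)p\times p},$$ and let $[U~~T]=QR$ be an economy-size QR decomposition with $Q\in\mathbb{C}^{(j+1)p\times 2p}$ having orthonormal columns and $R\in\mathbb{C}^{2p\times 2p}$. Then $\mathcal{R}(X_j)=V_{j+1}(UT^H+TU^H)V_{j+1}^H$, so $\operatorname{rank}\mathcal{R}(X_j)\le 2p$, and for every unitarily invariant norm $\|\cdot\|$, $$\|\mathcal{R}(X_j)\|=\left\|R\begin{bmatrix}0&I_p\\ I_p&0\end{bmatrix}R^H\right\|.$$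
   Context: Shifts: a set $\mathcal{S}_j=\{s_1,\dots,s_j\}\subset\mathbb{C}$ (finite) disjoint from the spectrum of $A^H$. The block rational Krylov space is $\mathfrak{K}_{j+1}=\operatorname{range}([C^H,(A^H-s_1I)^{-1}C^H,\dots,(A^H-s_jI)^{-1}C^H])$, assumed to have dimension $(j+1)p$. An orthonormal block rational Arnoldi decomposition (BRAD) is a relation $A^HV_{j+1}\underline{K}_j=V_{j+1}\underline{H}_j$ where: the columns of $V_{j+1}\in\mathbb{C}^{n\times(j+1)p}$ are orthonormal and span $\mathfrak{K}_{j+1}$; $\underline{H}_j,\underline{K}_j\in\mathbb{C}^{(j+1)p\times jp}$ are block upper Hessenberg with $p\times p$ blocks $H_{ik},K_{ik}$, where for each $i=1,\dots,j$ at least one of the subdiagonal blocks $H_{i+1,i},K_{i+1,i}$ is nonsingular and $\beta_iK_{i+1,i}=\gamma_iH_{i+1,i}$ for scalars with $|\beta_i|+|\gamma_i|\neq0$, the quotients $\beta_i/\gamma_i$ (the poles) being the shifts $s_1,\dots,s_j$. Here $\underline{K}_j$ is of full column rank. *)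

theory Defs
  imports "Jordan_Normal_Form.Schur_Decomposition"
          "Jordan_Normal_Form.Gauss_Jordan_Elimination"
          "Jordan_Normal_Form.DL_Rank"
begin

abbreviation adj :: "complex mat \<Rightarrow> complex mat" where
  "adj M \<equiv> mat_adjoint M"

definition inv_m :: "complex mat \<Rightarrow> complex mat" where
  "inv_m M = the (mat_inverse M)"

definition mrank :: "complex mat \<Rightarrow> nat" where
  "mrank M = vec_space.rank (dim_row M) M"

definition col_space :: "complex mat \<Rightarrow> complex vec set" where
  "col_space M = {M *\<^sub>v x | x. x \<in> carrier_vec (dim_col M)}"

definition ortho_compl :: "nat \<Rightarrow> complex vec set \<Rightarrow> complex vec set" where
  "ortho_compl k S = {y \<in> carrier_vec k. \<forall>x\<in>S. conjugate y \<bullet> x = 0}"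

definition cols_basis_of :: "complex mat \<Rightarrow> complex vec set \<Rightarrow> bool" where
  "cols_basis_of M S \<longleftrightarrow> col_space M = S \<and>
     (\<forall>x \<in> carrier_vec (dim_col M). M *\<^sub>v x = 0\<^sub>v (dim_row M) \<longrightarrow> x = 0\<^sub>v (dim_col M))"

definition orthonormal_cols :: "complex mat \<Rightarrow> bool" where
  "orthonormal_cols M \<longleftrightarrow> adj M * M = 1\<^sub>m (dim_col M)"

definition unitary :: "nat \<Rightarrow> complex mat \<Rightarrow> bool" where
  "unitary k M \<longleftrightarrow> M \<in> carrier_mat k k \<and> adj M * M = 1\<^sub>m k \<and> M * adj M = 1\<^sub>m k"

definition hcat :: "complex mat \<Rightarrow> complex mat \<Rightarrow> complex mat" where
  "hcat M N = mat (dim_row M) (dim_col M + dim_col N)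
     (\<lambda>(i,k). if k < dim_col M then M $$ (i,k) else N $$ (i, k - dim_col M))"

text \<open>The (i,k) block (0-based) of size p x p.\<close>
definition blk :: "nat \<Rightarrow> complex mat \<Rightarrow> nat \<Rightarrow> nat \<Rightarrow> complex mat" where
  "blk p M i k = mat p p (\<lambda>(a,b). M $$ (i*p + a, k*p + b))"

text \<open>Block rational Krylov matrix [C^H, (A^H - s_1 I)^{-1} C^H, ..., (A^H - s_j I)^{-1} C^H].\<close>
definition krylov_mat :: "nat \<Rightarrow> nat \<Rightarrow> complex mat \<Rightarrow> complex mat \<Rightarrow> (nat \<Rightarrow> complex) \<Rightarrow> nat \<Rightarrow> complex mat" where
  "krylov_mat n p A C s j = mat n ((j+1)*p) (\<lambda>(r,c).
     if c div p = 0 then adj C $$ (r, c mod p)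
     else (inv_m (adj A - s (c div p) \<cdot>\<^sub>m 1\<^sub>m n) * adj C) $$ (r, c mod p))"

definition is_BRAD :: "nat \<Rightarrow> nat \<Rightarrow> nat \<Rightarrow> complex mat \<Rightarrow> complex mat \<Rightarrow>
    complex mat \<Rightarrow> complex mat \<Rightarrow> complex mat \<Rightarrow> bool" where
  "is_BRAD n p j A C V K H \<longleftrightarrow>
     V \<in> carrier_mat n ((j+1)*p) \<and> K \<in> carrier_mat ((j+1)*p) (j*p) \<and>
     H \<in> carrier_mat ((j+1)*p) (j*p) \<and>
     adj A * V * K = V * H \<and> orthonormal_cols V \<and>
     (\<exists>s :: nat \<Rightarrow> complex.
        (\<forall>i \<in> {1..j}. \<not> eigenvalue (adj A) (s i)) \<and>
        col_space V = col_space (krylov_mat n p A C s j) \<and>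
        mrank (krylov_mat n p A C s j) = (j+1)*p \<and>
        (\<forall>i\<le>j. \<forall>k<j. i > k+1 \<longrightarrow> blk p H i k = 0\<^sub>m p p \<and> blk p K i k = 0\<^sub>m p p) \<and>
        (\<forall>i \<in> {1..j}.
           (invertible_mat (blk p H i (i-1)) \<or> invertible_mat (blk p K i (i-1))) \<and>
           (\<exists>\<beta> \<gamma>::complex. (\<beta> \<noteq> 0 \<or> \<gamma> \<noteq> 0) \<and>
              \<beta> \<cdot>\<^sub>m blk p K i (i-1) = \<gamma> \<cdot>\<^sub>m blk p H i (i-1) \<and>
              \<gamma> \<noteq> 0 \<and> \<beta> / \<gamma> = s i)))"

text \<open>Unitarily invariant norm, as a family over all matrix sizes: a norm on each
  C^{r x c}, invariant under unitary multiplication on both sides, and (as is implicit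
  when comparing norms of matrices of different sizes, i.e. the norm is a symmetric
  gauge function of the singular values) invariant under padding with zeros.\<close>
definition unitarily_invariant_norm :: "(complex mat \<Rightarrow> real) \<Rightarrow> bool" where
  "unitarily_invariant_norm N \<longleftrightarrow>
    (\<forall>r c. \<forall>M \<in> carrier_mat r c. \<forall>M' \<in> carrier_mat r c. \<forall>a::complex.
        N M \<ge> 0 \<and> (N M = 0 \<longleftrightarrow> M = 0\<^sub>m r c) \<and>
        N (a \<cdot>\<^sub>m M) = cmod a * N M \<and> N (M + M') \<le> N M + N M') \<and>
    (\<forall>r c. \<forall>M \<in> carrier_mat r c. \<forall>P Q. unitary r P \<and> unitary c Q \<longrightarrow>
        N (P * M * Q) = N M) \<and>
    (\<forall>r c r' c'. \<forall>M \<in> carrier_mat r c.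
        N (four_block_mat M (0\<^sub>m r c') (0\<^sub>m r' c) (0\<^sub>m r' c')) = N M)"

end

theory Submission
  imports Defs
begin

lemma adj_def2: "adj A = mat (dim_col A) (dim_row A) (\<lambda>(i,k). cnj (A $$ (k,i)))"
  unfolding mat_adjoint_def mat_of_rows_def
  by (intro eq_matI) (auto simp: col_def)

lemma adj_dims[simp]: "dim_row (adj A) = dim_col A" "dim_col (adj A) = dim_row A"
  by (simp_all add: adj_def2)

lemma adj_index[simp]: "i < dim_col A \<Longrightarrow> k < dim_row A \<Longrightarrow> adj A $$ (i,k) = cnj (A $$ (k,i))"
  by (simp add: adj_def2)

lemma adj_carrier[simp]: "A \<in> carrier_mat r c \<Longrightarrow> adj A \<in> carrier_mat c r"
  unfolding carrier_mat_def by simp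

lemma adj_adj[simp]: "adj (adj A) = A"
  by (intro eq_matI) auto

lemma adj_mult: assumes "dim_col A = dim_row B" shows "adj (A * B) = adj B * adj A"
proof (intro eq_matI)
  fix i k assume i: "i < dim_row (adj B * adj A)" and k: "k < dim_col (adj B * adj A)"
  have "adj (A * B) $$ (i,k) = cnj (row A k \<bullet> col B i)" using i k by simp
  also have "\<dots> = (\<Sum>l\<in>{0..<dim_row B}. cnj (A $$ (k,l)) * cnj (B $$ (l,i)))"
    using i k assms by (simp add: scalar_prod_def)
  also have "\<dots> = row (adj B) i \<bullet> col (adj A) k"
    using i k assms by (simp add: scalar_prod_def mult.commute)
  also have "\<dots> = (adj B * adj A) $$ (i,k)" using i k by simp
  finally show "adj (A * B) $$ (i,k) = (adj B * adj A) $$ (i,k)" .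
qed auto

lemma adj_add: assumes "dim_row A = dim_row B" "dim_col A = dim_col B"
  shows "adj (A + B) = adj A + adj B"
  using assms by (intro eq_matI) auto

lemma adj_minus: assumes "dim_row A = dim_row B" "dim_col A = dim_col B"
  shows "adj (A - B) = adj A - adj B"
  using assms by (intro eq_matI) auto

lemma adj_smult: "adj (c \<cdot>\<^sub>m A) = cnj c \<cdot>\<^sub>m adj A"
  by (intro eq_matI) auto

lemma adj_one[simp]: "adj (1\<^sub>m n) = 1\<^sub>m n"
  by (intro eq_matI) auto

lemma adj_zero[simp]: "adj (0\<^sub>m r c) = 0\<^sub>m c r"
  by (intro eq_matI) auto

lemma mA: "dim_col (A::complex mat) = dim_row B \<Longrightarrow> dim_col B = dim_row C \<Longrightarrow> A * B * C = A * (B * C)"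
  by (rule assoc_mult_mat[of A "dim_row A" "dim_col A" B "dim_col B" C "dim_col C"]) auto

lemma dL: "dim_col (A::complex mat) = dim_row B \<Longrightarrow> dim_row B = dim_row C \<Longrightarrow> dim_col B = dim_col C \<Longrightarrow>
   A * (B + C) = A * B + A * C"
  by (rule mult_add_distrib_mat[of A "dim_row A" "dim_col A" B "dim_col B" C]) auto

lemma dR: "dim_col (A::complex mat) = dim_row C \<Longrightarrow> dim_row A = dim_row B \<Longrightarrow> dim_col A = dim_col B \<Longrightarrow>
   (A + B) * C = A * C + B * C"
  by (rule add_mult_distrib_mat[of A "dim_row A" "dim_col A" B C "dim_col C"]) auto

lemma sL: "dim_col (A::complex mat) = dim_row B \<Longrightarrow> A * (c \<cdot>\<^sub>m B) = c \<cdot>\<^sub>m (A * B)"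
  by (rule mult_smult_distrib[of A "dim_row A" "dim_col A" B "dim_col B"]) auto

lemma sR: "dim_col (A::complex mat) = dim_row B \<Longrightarrow> (c \<cdot>\<^sub>m A) * B = c \<cdot>\<^sub>m (A * B)"
  by (rule mult_smult_assoc_mat[of A "dim_row A" "dim_col A" B "dim_col B"]) auto

lemma aA: "dim_row (A::complex mat) = dim_row B \<Longrightarrow> dim_col A = dim_col B \<Longrightarrow> dim_row B = dim_row C \<Longrightarrow> dim_col B = dim_col C \<Longrightarrow>
  A + B + C = A + (B + C)"
  by (rule assoc_add_mat[of A "dim_row A" "dim_col A"]) auto

lemma aC: "dim_row (A::complex mat) = dim_row B \<Longrightarrow> dim_col A = dim_col B \<Longrightarrow> A + B = B + A"
  by (rule comm_add_mat[of A "dim_row A" "dim_col A"]) auto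

lemma aLC: "dim_row (A::complex mat) = dim_row B \<Longrightarrow> dim_col A = dim_col B \<Longrightarrow> dim_row B = dim_row C \<Longrightarrow> dim_col B = dim_col C \<Longrightarrow>
  A + (B + C) = B + (A + C)"
  by (metis aA aC index_add_mat(2,3))

lemma mult_unit_col: assumes "(A::complex mat) \<in> carrier_mat r c" "i < c"
  shows "A *\<^sub>v unit_vec c i = col A i"
  using assms by (intro eq_vecI) (auto simp: scalar_prod_right_unit carrier_matD)

lemma cs_adj: assumes A: "(A::complex mat) \<in> carrier_mat r c" and y: "y \<in> carrier_vec r" and x: "x \<in> carrier_vec c"
  shows "conjugate y \<bullet> (A *\<^sub>v x) = conjugate (adj A *\<^sub>v y) \<bullet> x"
proof -
  have "conjugate y \<bullet> (A *\<^sub>v x) = (\<Sum>i<r. cnj (y $ i) * (\<Sum>l<c. A $$ (i,l) * x $ l))"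
    using A x y by (simp add: scalar_prod_def lessThan_atLeast0)
  also have "\<dots> = (\<Sum>i<r. \<Sum>l<c. cnj (y $ i) * A $$ (i,l) * x $ l)"
    by (simp add: sum_distrib_left mult.assoc)
  also have "\<dots> = (\<Sum>l<c. \<Sum>i<r. cnj (y $ i) * A $$ (i,l) * x $ l)"
    by (rule sum.swap)
  also have "\<dots> = (\<Sum>l<c. (\<Sum>i<r. cnj (y $ i) * A $$ (i,l)) * x $ l)"
    by (simp add: sum_distrib_right)
  also have "\<dots> = (\<Sum>l<c. cnj (\<Sum>i<r. cnj (A $$ (i,l)) * y $ i) * x $ l)"
    by (simp add: mult.commute)
  also have "\<dots> = conjugate (adj A *\<^sub>v y) \<bullet> x"
    using A x y by (simp add: scalar_prod_def lessThan_atLeast0)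
  finally show ?thesis .
qed

lemma ortho_zero: assumes U: "(U::complex mat) \<in> carrier_mat N p" and L: "L \<in> carrier_mat N k"
  and B: "cols_basis_of U (ortho_compl N (col_space L))"
  shows "adj U * L = 0\<^sub>m p k"
proof (intro eq_matI)
  fix i l assume i: "i < dim_row (0\<^sub>m p k :: complex mat)" and l: "l < dim_col (0\<^sub>m p k :: complex mat)"
  have "col U i \<in> col_space U"
    unfolding col_space_def using U i mult_unit_col[OF U, of i] by (auto intro!: exI[of _ "unit_vec p i"])
  hence ci: "col U i \<in> ortho_compl N (col_space L)" using B unfolding cols_basis_of_def by auto
  have "col L l \<in> col_space L"
    unfolding col_space_def using L l mult_unit_col[OF L, of l] by (auto intro!: exI[of _ "unit_vec k l"])
  with ci have "conjugate (col U i) \<bullet> col L l = 0" unfolding ortho_compl_def by auto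
  moreover have "row (adj U) i = conjugate (col U i)"
    using U i by (intro eq_vecI) auto
  ultimately show "(adj U * L) $$ (i,l) = 0\<^sub>m p k $$ (i,l)" using U L i l by simp
qed (insert U L, auto)

lemma inv_props: assumes X: "(X::complex mat) \<in> carrier_mat n n" and I: "invertible_mat X"
  shows "inv_m X \<in> carrier_mat n n" "X * inv_m X = 1\<^sub>m n" "inv_m X * X = 1\<^sub>m n"
proof -
  from I obtain B where XB: "X * B = 1\<^sub>m (dim_row X)" and BX: "B * X = 1\<^sub>m (dim_row B)"
    unfolding invertible_mat_def inverts_mat_def by auto
  have "dim_col B = n" using XB X by (metis index_mult_mat(3) index_one_mat(3) carrier_matD(1))
  moreover have "dim_row B = n" using BX X by (metis index_mult_mat(3) index_one_mat(3) carrier_matD(2))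
  ultimately have Bc: "B \<in> carrier_mat n n" by auto
  have "X \<in> Units (ring_mat TYPE(complex) n undefined)"
    using X Bc XB BX unfolding Units_def ring_mat_def by auto
  hence "mat_inverse X \<noteq> None" using mat_inverse(1)[OF X, of undefined] by auto
  then obtain C where C: "mat_inverse X = Some C" by (cases "mat_inverse X") auto
  from mat_inverse(2)[OF X C] have "X * C = 1\<^sub>m n \<and> C * X = 1\<^sub>m n \<and> C \<in> carrier_mat n n" .
  thus "inv_m X \<in> carrier_mat n n" "X * inv_m X = 1\<^sub>m n" "inv_m X * X = 1\<^sub>m n"
    unfolding inv_m_def C by auto
qed

lemma invI: assumes X: "(X::complex mat) \<in> carrier_mat n n" and Y: "Y \<in> carrier_mat n n"
  and XY: "X * Y = 1\<^sub>m n" shows "invertible_mat X"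
proof -
  have "Y * X = 1\<^sub>m n" by (rule mat_mult_left_right_inverse[OF X Y XY])
  thus ?thesis using X Y XY unfolding invertible_mat_def inverts_mat_def square_mat.simps by auto
qed

lemma inv_unique: assumes X: "(X::complex mat) \<in> carrier_mat n n" and Y: "Y \<in> carrier_mat n n"
  and XY: "X * Y = 1\<^sub>m n" shows "inv_m X = Y"
proof -
  have I: "invertible_mat X" by (rule invI[OF X Y XY])
  note ip = inv_props[OF X I]
  have "inv_m X = inv_m X * (X * Y)" using ip XY by (metis right_mult_one_mat)
  also have "\<dots> = (inv_m X * X) * Y" by (rule assoc_mult_mat[symmetric, OF ip(1) X Y])
  also have "\<dots> = Y" using ip Y by simp
  finally show ?thesis .
qed

lemma adj_inv: assumes X: "(X::complex mat) \<in> carrier_mat n n" and I: "invertible_mat X"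
  shows "invertible_mat (adj X)" "inv_m (adj X) = adj (inv_m X)"
proof -
  note ip = inv_props[OF X I]
  have e: "adj X * adj (inv_m X) = 1\<^sub>m n"
    using ip X by (metis adj_mult adj_one carrier_matD(1,2))
  show "invertible_mat (adj X)" by (rule invI[OF _ _ e]) (use X ip in auto)
  show "inv_m (adj X) = adj (inv_m X)" by (rule inv_unique[OF _ _ e]) (use X ip in auto)
qed

lemma kernel_inv: assumes X: "(X::complex mat) \<in> carrier_mat n n"
  and K: "\<And>x. x \<in> carrier_vec n \<Longrightarrow> X *\<^sub>v x = 0\<^sub>v n \<Longrightarrow> x = 0\<^sub>v n"
  shows "invertible_mat X"
proof -
  have "det X \<noteq> 0" using det_0_iff_vec_prod_zero[OF X] K by auto
  from det_non_zero_imp_unit[OF X this, of undefined]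
  obtain Y where Y: "Y \<in> carrier_mat n n" "X * Y = 1\<^sub>m n"
    unfolding Units_def ring_mat_def by auto
  show ?thesis by (rule invI[OF X Y])
qed

lemma mat_eq_vec: assumes P: "(P::complex mat) \<in> carrier_mat n n" and Q: "Q \<in> carrier_mat n n"
  and e: "\<And>v. v \<in> carrier_vec n \<Longrightarrow> P *\<^sub>v v = Q *\<^sub>v v" shows "P = Q"
proof (intro eq_matI)
  fix i l assume i: "i < dim_row Q" and l: "l < dim_col Q"
  have "col P l = col Q l" using e[of "unit_vec n l"] mult_unit_col[OF P] mult_unit_col[OF Q] l Q by auto
  thus "P $$ (i,l) = Q $$ (i,l)" using i l P Q by (metis carrier_matD(1,2) col_def index_vec)
qed (insert P Q, auto)

lemma dmL: "dim_col (A::complex mat) = dim_row B \<Longrightarrow> dim_row B = dim_row C \<Longrightarrow> dim_col B = dim_col C \<Longrightarrow>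
   A * (B - C) = A * B - A * C"
  by (rule mult_minus_distrib_mat[of A "dim_row A" "dim_col A" B "dim_col B" C]) auto

lemma dmR: "dim_col (A::complex mat) = dim_row C \<Longrightarrow> dim_row A = dim_row B \<Longrightarrow> dim_col A = dim_col B \<Longrightarrow>
   (A - B) * C = A * C - B * C"
  by (rule minus_mult_distrib_mat[of A "dim_row A" "dim_col A" B C "dim_col C"]) auto

lemma z1[simp]: "dim_row (A::complex mat) = r \<Longrightarrow> dim_col A = c \<Longrightarrow> 0\<^sub>m r c + A = A"
  by (intro eq_matI) auto
lemma z2[simp]: "dim_row (A::complex mat) = r \<Longrightarrow> dim_col A = c \<Longrightarrow> A + 0\<^sub>m r c = A"
  by (intro eq_matI) auto
lemma z3[simp]: "dim_row (A::complex mat) = r \<Longrightarrow> dim_col A = c \<Longrightarrow> A - 0\<^sub>m r c = A"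
  by (intro eq_matI) auto
lemma z4[simp]: "(A::complex mat) - A = 0\<^sub>m (dim_row A) (dim_col A)"
  by (intro eq_matI) auto

lemma adj_four: assumes "(A::complex mat) \<in> carrier_mat r1 c1" "B \<in> carrier_mat r1 c2"
  "C \<in> carrier_mat r2 c1" "D \<in> carrier_mat r2 c2"
  shows "adj (four_block_mat A B C D) = four_block_mat (adj A) (adj C) (adj B) (adj D)"
  using assms by (intro eq_matI) auto

lemma norm_iso: assumes NN: "unitarily_invariant_norm NN" and E: "E \<in> carrier_mat n q"
  and EE: "adj E * E = 1\<^sub>m q" and M2: "M2 \<in> carrier_mat q q"
  shows "NN (E * M2 * adj E) = NN M2"
proof -
  define D where "D = 1\<^sub>m n - E * adj E"
  have Dc: "D \<in> carrier_mat n n" unfolding D_def using E by auto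
  have aE: "adj E \<in> carrier_mat q n" using E by simp
  have DE: "D * E = 0\<^sub>m n q"
  proof -
    have "D * E = E - E * (adj E * E)" unfolding D_def using E
      by (simp add: dmR mA)
    thus ?thesis using EE E by simp
  qed
  have ED: "adj E * D = 0\<^sub>m q n"
  proof -
    have "adj E * D = adj E - (adj E * E) * adj E" unfolding D_def using E
      by (simp add: dmL mA)
    thus ?thesis using EE E by simp
  qed
  have DD: "D * D = D"
  proof -
    have "D * D = D * (1\<^sub>m n - E * adj E)" by (subst (2) D_def) (rule refl)
    also have "\<dots> = D * 1\<^sub>m n - D * E * adj E" using E Dc
      by (simp add: dmL mA)
    finally have "D * D = D * 1\<^sub>m n - D * E * adj E" .
    thus ?thesis using DE E Dc by simp
  qed
  have S1: "E * adj E + D = 1\<^sub>m n" "D + E * adj E = 1\<^sub>m n" unfolding D_def using E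
    by (auto intro!: eq_matI)
  have aD: "adj D = D" unfolding D_def using E by (simp add: adj_minus adj_mult)
  define Om where "Om = four_block_mat E D (0\<^sub>m q q) (adj E)"
  define Oa where "Oa = four_block_mat (adj E) (0\<^sub>m q q) D E"
  have Omc: "Om \<in> carrier_mat (n+q) (n+q)" unfolding Om_def using E Dc
    by (metis add.commute four_block_carrier_mat adj_carrier)
  have Oac: "Oa \<in> carrier_mat (n+q) (n+q)" unfolding Oa_def using E Dc
    by (metis add.commute four_block_carrier_mat adj_carrier)
  have aOm: "adj Om = Oa" unfolding Om_def Oa_def
    by (subst adj_four[OF E Dc zero_carrier_mat aE]) (simp add: aD)
  have O1: "Om * Oa = 1\<^sub>m (n+q)" unfolding Om_def Oa_def
    by (subst mult_four_block_mat[OF E Dc zero_carrier_mat aE aE zero_carrier_mat Dc E])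
       (use E Dc EE DD DE ED S1 in simp)
  have O2: "Oa * Om = 1\<^sub>m (n+q)" unfolding Om_def Oa_def
    by (subst mult_four_block_mat[OF aE zero_carrier_mat Dc E E Dc zero_carrier_mat aE])
       (use E Dc EE DD DE ED S1 in \<open>simp add: add.commute\<close>)
  have uO: "unitary (n+q) Om" "unitary (n+q) Oa" unfolding unitary_def using Omc Oac O1 O2 aOm by auto
  define P2 where "P2 = four_block_mat M2 (0\<^sub>m q n) (0\<^sub>m n q) (0\<^sub>m n n)"
  have P2c: "P2 \<in> carrier_mat (n+q) (n+q)" unfolding P2_def using M2
    by (metis add.commute four_block_carrier_mat zero_carrier_mat)
  have "Om * P2 = four_block_mat (E * M2) (0\<^sub>m n n) (0\<^sub>m q q) (0\<^sub>m q n)" unfolding Om_def P2_def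
    by (subst mult_four_block_mat[OF E Dc zero_carrier_mat aE M2 zero_carrier_mat zero_carrier_mat zero_carrier_mat])
       (use E Dc M2 in simp)
  hence "Om * P2 * Oa = four_block_mat (E * M2) (0\<^sub>m n n) (0\<^sub>m q q) (0\<^sub>m q n) * four_block_mat (adj E) (0\<^sub>m q q) D E"
    unfolding Oa_def by simp
  also have "\<dots> = four_block_mat (E * M2 * adj E) (0\<^sub>m n q) (0\<^sub>m q n) (0\<^sub>m q q)"
    by (subst mult_four_block_mat[OF mult_carrier_mat[OF E M2] zero_carrier_mat zero_carrier_mat zero_carrier_mat
       aE zero_carrier_mat Dc E]) (use E Dc M2 in simp)
  finally have  "NN (E * M2 * adj E) = NN (Om * P2 * Oa)"
    using NN E M2 unfolding unitarily_invariant_norm_def by (metis mult_carrier_mat adj_carrier)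
  also have "\<dots> = NN P2" using NN uO P2c unfolding unitarily_invariant_norm_def by blast
  also have "\<dots> = NN M2" using NN M2 unfolding unitarily_invariant_norm_def P2_def by blast
  finally show ?thesis .
qed

lemma hcat_four: "(U::complex mat) \<in> carrier_mat N p \<Longrightarrow> T \<in> carrier_mat N q \<Longrightarrow>
   hcat U T = four_block_mat U T (0\<^sub>m 0 p) (0\<^sub>m 0 q)"
  unfolding hcat_def by (intro eq_matI) auto

lemma four_triv: "(X::complex mat) \<in> carrier_mat r c \<Longrightarrow> B \<in> carrier_mat r 0 \<Longrightarrow> C \<in> carrier_mat 0 c
   \<Longrightarrow> D \<in> carrier_mat 0 0 \<Longrightarrow> four_block_mat X B C D = X"
  by (intro eq_matI) auto

lemma hcat_J: assumes U: "(U::complex mat) \<in> carrier_mat N p" and T: "T \<in> carrier_mat N p"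
  shows "hcat U T * four_block_mat (0\<^sub>m p p) (1\<^sub>m p) (1\<^sub>m p) (0\<^sub>m p p) * adj (hcat U T)
     = U * adj T + T * adj U"
proof -
  have h: "hcat U T = four_block_mat U T (0\<^sub>m 0 p) (0\<^sub>m 0 p)" by (rule hcat_four[OF U T])
  have a: "adj (hcat U T) = four_block_mat (adj U) (0\<^sub>m p 0) (adj T) (0\<^sub>m p 0)"
    unfolding h by (subst adj_four[OF U T zero_carrier_mat zero_carrier_mat]) simp
  have "hcat U T * four_block_mat (0\<^sub>m p p) (1\<^sub>m p) (1\<^sub>m p) (0\<^sub>m p p) = four_block_mat T U (0\<^sub>m 0 p) (0\<^sub>m 0 p)"
    unfolding h by (subst mult_four_block_mat[OF U T zero_carrier_mat zero_carrier_mat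
      zero_carrier_mat one_carrier_mat one_carrier_mat zero_carrier_mat]) (use U T in simp)
  hence "hcat U T * four_block_mat (0\<^sub>m p p) (1\<^sub>m p) (1\<^sub>m p) (0\<^sub>m p p) * adj (hcat U T) =
     four_block_mat T U (0\<^sub>m 0 p) (0\<^sub>m 0 p) * four_block_mat (adj U) (0\<^sub>m p 0) (adj T) (0\<^sub>m p 0)"
    unfolding a by simp
  also have "\<dots> = T * adj U + U * adj T"
    by (subst mult_four_block_mat[OF T U zero_carrier_mat zero_carrier_mat adj_carrier[OF U]
      zero_carrier_mat adj_carrier[OF T] zero_carrier_mat], rule four_triv) (use U T in auto)
  also have "\<dots> = U * adj T + T * adj U" using U T by (intro aC) auto
  finally show ?thesis .
qed

lemma abc_half: "dim_row (a::complex mat) = dim_row b \<Longrightarrow> dim_col a = dim_col b \<Longrightarrow> dim_row b = dim_row c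
  \<Longrightarrow> dim_col b = dim_col c \<Longrightarrow> a + b + c = a + (1/2) \<cdot>\<^sub>m c + (b + (1/2) \<cdot>\<^sub>m c)"
  by (intro eq_matI) auto

lemma bac_half: "dim_row (a::complex mat) = dim_row b \<Longrightarrow> dim_col a = dim_col b \<Longrightarrow> dim_row b = dim_row c
  \<Longrightarrow> dim_col b = dim_col c \<Longrightarrow> b + (a + c) = a + (1/2) \<cdot>\<^sub>m c + (b + (1/2) \<cdot>\<^sub>m c)"
  by (intro eq_matI) auto

lemma txy_half: "dim_row (t::complex mat) = dim_row x \<Longrightarrow> dim_col t = dim_col x \<Longrightarrow> dim_row x = dim_row y
  \<Longrightarrow> dim_col x = dim_col y \<Longrightarrow> q = x + y \<Longrightarrow> t + (q - (1/2) \<cdot>\<^sub>m y) = t + x + (1/2) \<cdot>\<^sub>m y"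
  by (intro eq_matI) auto


context vec_space
begin
lemma rank_mult_le: assumes E: "E \<in> carrier_mat n q" and X: "X \<in> carrier_mat q r"
  shows "rank (E * X) \<le> q"
proof -
  have Ec: "set (cols E) \<subseteq> carrier_vec n" using E cols_dim by (metis carrier_matD(1))
  have sub: "set (cols (E*X)) \<subseteq> span (set (cols E))"
  proof
    fix v assume "v \<in> set (cols (E*X))"
    then obtain c where c: "c < dim_col (E*X)" "v = col (E*X) c" by (metis cols_length cols_nth in_set_conv_nth)
    have "v = E *\<^sub>v col X c" using c E X by auto
    also have "\<dots> = lincomb_list (\<lambda>i. col X c $ i) (cols E)"
    proof -
      have "lincomb_list (\<lambda>i. col X c $ i) (cols E) = mat_of_cols n (cols E) *\<^sub>v vec (length (cols E)) (\<lambda>i. col X c $ i)"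
        by (rule lincomb_list_as_mat_mult) (use Ec in auto)
      also have "\<dots> = E *\<^sub>v col X c" using E X by (intro arg_cong2[where f="(*\<^sub>v)"]) (auto intro!: eq_vecI)
      finally show ?thesis by simp
    qed
    also have "\<dots> \<in> span_list (cols E)" unfolding span_list_def by auto
    finally show "v \<in> span (set (cols E))" using span_list_as_span[OF Ec] by simp
  qed
  let ?W = "span (set (cols E))"
  have vsW: "vectorspace class_ring (vs ?W)" using span_is_subspace[THEN subspace_is_vs, OF Ec] by auto
  have smW: "submodule class_ring ?W V" using Ec by (simp add: span_is_submodule)
  have ssp: "VectorSpace.subspace class_ring (span (set (cols (E*X)))) (vs ?W)"
    using vectorspace.span_is_subspace[OF vsW, of "set (cols (E*X))", unfolded
    span_li_not_depend(1)[OF sub smW]] sub by auto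
  have fin_dim: "vectorspace.fin_dim class_ring (vs ?W)"
       "vectorspace.fin_dim class_ring (vs ?W\<lparr>carrier := span (set (cols (E*X)))\<rparr>)"
    using fin_dim_span_cols[OF E] fin_dim_span_cols[OF mult_carrier_mat[OF E X]] by auto
  have "rank (E*X) \<le> vectorspace.dim class_ring (vs ?W)"
    unfolding rank_def using vectorspace.subspace_dim[OF vsW ssp fin_dim(1) fin_dim(2)] by simp
  also have "\<dots> = rank E" unfolding rank_def ..
  also have "\<dots> \<le> q" using rank_le_nc[OF E] .
  finally show ?thesis .
qed
end

lemma mrank_mult_le: assumes E: "(E::complex mat) \<in> carrier_mat n q" and X: "X \<in> carrier_mat q r"
  shows "mrank (E * X) \<le> q"
proof -
  have d: "dim_row (E*X) = n" using E by simp
  show ?thesis unfolding mrank_def d by (rule vec_space.rank_mult_le[OF E X])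
qed


lemma core:
  fixes A B C V K H Ct L Y U W :: "complex mat"
  assumes A: "A \<in> carrier_mat n n" and B: "B \<in> carrier_mat n m" and C: "C \<in> carrier_mat p n"
    and V: "V \<in> carrier_mat n N" and K: "K \<in> carrier_mat N k" and H: "H \<in> carrier_mat N k"
    and AVK: "adj A * V * K = V * H" and Vo: "adj V * V = 1\<^sub>m N"
    and Ct: "Ct \<in> carrier_mat N p" and CtV: "adj C = V * Ct"
    and L: "L \<in> carrier_mat N k" and Linv: "invertible_mat (adj L * K)"
    and Y: "Y \<in> carrier_mat k k" and Yh: "adj Y = Y"
    and Ric: "adj (adj H * L * inv_m (adj K * L)) * Y + Y * (adj H * L * inv_m (adj K * L))
       + adj (adj Ct * L * inv_m (adj K * L)) * (adj Ct * L * inv_m (adj K * L))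
       - Y * (adj K * adj V * B) * adj (adj K * adj V * B) * Y = 0\<^sub>m k k"
    and U: "U \<in> carrier_mat N p" and Ub: "cols_basis_of U (ortho_compl N (col_space L))"
    and W: "W \<in> carrier_mat N p" and Wb: "cols_basis_of W (ortho_compl N (col_space K))"
  shows "invertible_mat (adj W * U) \<and>
    (adj A * (V * K * Y * adj K * adj V) + (V * K * Y * adj K * adj V) * A + adj C * C
      - (V * K * Y * adj K * adj V) * B * adj B * (V * K * Y * adj K * adj V)
     = V * (U * adj (K * Y * adj H * W * inv_m (adj U * W)
        + (Ct - (1/2::complex) \<cdot>\<^sub>m (U * inv_m (adj W * U) * adj W * Ct)) * adj Ct * W * inv_m (adj U * W))
       + (K * Y * adj H * W * inv_m (adj U * W)
        + (Ct - (1/2::complex) \<cdot>\<^sub>m (U * inv_m (adj W * U) * adj W * Ct)) * adj Ct * W * inv_m (adj U * W)) * adj U) * adj V)"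
proof -
  note dims = carrier_matD[OF A] carrier_matD[OF B] carrier_matD[OF C] carrier_matD[OF V]
    carrier_matD[OF K] carrier_matD[OF H] carrier_matD[OF Ct] carrier_matD[OF L] carrier_matD[OF Y]
    carrier_matD[OF U] carrier_matD[OF W]
  have adjc[simp]: "adj K \<in> carrier_mat k N" "adj U \<in> carrier_mat p N" "adj W \<in> carrier_mat p N"
    "adj L \<in> carrier_mat k N" "adj H \<in> carrier_mat k N" "adj V \<in> carrier_mat N n" "adj Ct \<in> carrier_mat p N"
    using K U W L H V Ct by auto
  have UL: "adj U * L = 0\<^sub>m p k" by (rule ortho_zero[OF U L Ub])
  have WK: "adj W * K = 0\<^sub>m p k" by (rule ortho_zero[OF W K Wb])
  have KW: "adj K * W = 0\<^sub>m k p"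
    using arg_cong[OF WK, of adj] by (simp add: adj_mult dims)
  have KLc: "adj K * L \<in> carrier_mat k k" by (intro carrier_matI) (simp_all add: dims)
  have KLi: "invertible_mat (adj K * L)"
  proof -
    have "adj (adj L * K) = adj K * L" by (simp add: adj_mult dims)
    moreover have "adj L * K \<in> carrier_mat k k" by (intro carrier_matI) (simp_all add: dims)
    ultimately show ?thesis using adj_inv(1)[OF _ Linv, of k] by simp
  qed
  define KlI where "KlI = inv_m (adj K * L)"
  note KlIp = inv_props[OF KLc KLi, folded KlI_def]
  define G where "G = L * KlI"
  have G: "G \<in> carrier_mat N k" unfolding G_def by (rule mult_carrier_mat[OF L KlIp(1)])
  have aG[simp]: "adj G \<in> carrier_mat k N" using G by simp
  note dims2 = carrier_matD[OF G] carrier_matD[OF KlIp(1)]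
  have KG: "adj K * G = 1\<^sub>m k" unfolding G_def using KlIp K L by (simp add: mA[symmetric] dims)
  have UG: "adj U * G = 0\<^sub>m p k" unfolding G_def using KlIp UL by (simp add: mA[symmetric] dims)
  have GK: "adj G * K = 1\<^sub>m k" using arg_cong[OF KG, of adj] by (simp add: adj_mult dims dims2)
  have GU: "adj G * U = 0\<^sub>m k p" using arg_cong[OF UG, of adj] by (simp add: adj_mult dims dims2)
  have decomp: "\<exists>z \<in> carrier_vec p. v = G *\<^sub>v (adj K *\<^sub>v v) + W *\<^sub>v z" if v: "v \<in> carrier_vec N" for v
  proof -
    define a where "a = adj K *\<^sub>v v"
    have a: "a \<in> carrier_vec k" unfolding a_def by (intro carrier_vecI) (simp add: dims)
    define r where "r = v - G *\<^sub>v a"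
    have r: "r \<in> carrier_vec N" unfolding r_def using v by (intro carrier_vecI) (simp add: dims2)
    have "adj K *\<^sub>v r = adj K *\<^sub>v v - adj K *\<^sub>v (G *\<^sub>v a)" unfolding r_def
      by (rule mult_minus_distrib_mat_vec[of _ k N]) (use K v G a in auto)
    also have "adj K *\<^sub>v (G *\<^sub>v a) = (adj K * G) *\<^sub>v a" by (rule assoc_mult_mat_vec[symmetric, OF adjc(1) G a])
    finally have Kr: "adj K *\<^sub>v r = 0\<^sub>v k" unfolding KG a_def[symmetric] using a by simp
    have "r \<in> ortho_compl N (col_space K)"
      unfolding ortho_compl_def col_space_def
    proof (safe)
      fix y :: "complex vec" assume y: "y \<in> carrier_vec (dim_col K)"
      have "conjugate r \<bullet> (K *\<^sub>v y) = conjugate (adj K *\<^sub>v r) \<bullet> y"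
        by (rule cs_adj[OF K r]) (use y K in simp)
      thus "conjugate r \<bullet> (K *\<^sub>v y) = 0" unfolding Kr using y K by simp
    qed (rule r)
    hence "r \<in> col_space W" using Wb unfolding cols_basis_of_def by simp
    then obtain z where z: "z \<in> carrier_vec p" "r = W *\<^sub>v z" unfolding col_space_def using W by auto
    have "v = G *\<^sub>v a + r" unfolding r_def using v G a by (intro eq_vecI) auto
    thus ?thesis using z unfolding a_def by auto
  qed
  have WUc: "adj W * U \<in> carrier_mat p p" by (intro carrier_matI) (simp_all add: dims)
  have WUi: "invertible_mat (adj W * U)"
  proof (rule kernel_inv[OF WUc])
    fix x assume x: "x \<in> carrier_vec p" and x0: "(adj W * U) *\<^sub>v x = 0\<^sub>v p"
    define u where "u = U *\<^sub>v x"
    have u: "u \<in> carrier_vec N" unfolding u_def by (intro carrier_vecI) (simp add: dims)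
    have "u \<in> col_space U" unfolding u_def col_space_def using x U by auto
    hence uo: "u \<in> ortho_compl N (col_space L)" using Ub unfolding cols_basis_of_def by simp
    obtain z where z: "z \<in> carrier_vec p" and uz: "u = G *\<^sub>v (adj K *\<^sub>v u) + W *\<^sub>v z" using decomp[OF u] by auto
    define a where "a = adj K *\<^sub>v u"
    have a: "a \<in> carrier_vec k" unfolding a_def by (intro carrier_vecI) (simp add: dims)
    have "G *\<^sub>v a = L *\<^sub>v (KlI *\<^sub>v a)" unfolding G_def by (rule assoc_mult_mat_vec[OF L KlIp(1) a])
    hence "G *\<^sub>v a \<in> col_space L" unfolding col_space_def using KlIp a L by auto
    hence c1: "conjugate u \<bullet> (G *\<^sub>v a) = 0" using uo unfolding ortho_compl_def by auto
    have "adj W *\<^sub>v u = 0\<^sub>v p" unfolding u_def using x0 assoc_mult_mat_vec[OF adjc(3) U x] by simp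
    hence c2: "conjugate u \<bullet> (W *\<^sub>v z) = 0" using cs_adj[OF W u z] z by simp
    have "conjugate u \<bullet> u = conjugate u \<bullet> (G *\<^sub>v a) + conjugate u \<bullet> (W *\<^sub>v z)"
      by (subst uz, unfold a_def[symmetric], rule scalar_prod_add_distrib[of _ N]) (use u G a W z in auto)
    hence "u \<bullet>c u = 0" using c1 c2 conjugate_vec_sprod_comm[OF u u] by simp
    hence "u = 0\<^sub>v N" using conjugate_square_eq_0_vec[OF u] by simp
    thus "x = 0\<^sub>v p" using Ub x U unfolding cols_basis_of_def u_def by auto
  qed
  define Zp where "Zp = inv_m (adj W * U)"
  note Zpp = inv_props[OF WUc WUi, folded Zp_def]
  have UWc: "adj U * W \<in> carrier_mat p p" by (intro carrier_matI) (simp_all add: dims)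
  have aWU: "adj (adj W * U) = adj U * W" by (simp add: adj_mult dims)
  have UWi: "invertible_mat (adj U * W)" using adj_inv(1)[OF WUc WUi] aWU by simp
  define Z where "Z = inv_m (adj U * W)"
  have ZZp: "adj Zp = Z" unfolding Z_def Zp_def using adj_inv(2)[OF WUc WUi] aWU by simp
  note Zp = inv_props[OF UWc UWi, folded Z_def]
  have ZpZ: "adj Z = Zp" using ZZp[symmetric] by simp
  note dims3 = carrier_matD[OF Zpp(1)] carrier_matD[OF Zp(1)]
  have P1: "G * adj K + W * (Z * adj U) = 1\<^sub>m N"
  proof (rule mat_eq_vec[of _ N])
    show "G * adj K + W * (Z * adj U) \<in> carrier_mat N N" by (intro carrier_matI) (simp_all add: dims dims2 dims3)
    show "1\<^sub>m N \<in> carrier_mat N N" by simp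
    fix v :: "complex vec" assume v: "v \<in> carrier_vec N"
    obtain z where z: "z \<in> carrier_vec p" and vz: "v = G *\<^sub>v (adj K *\<^sub>v v) + W *\<^sub>v z" using decomp[OF v] by auto
    define a where "a = adj K *\<^sub>v v"
    have a: "a \<in> carrier_vec k" unfolding a_def by (intro carrier_vecI) (simp add: dims)
    have "adj U *\<^sub>v v = adj U *\<^sub>v (G *\<^sub>v a) + adj U *\<^sub>v (W *\<^sub>v z)"
      by (subst vz, unfold a_def[symmetric], rule mult_add_distrib_mat_vec[of _ p N]) (use U G a W z in auto)
    also have "\<dots> = (adj U * G) *\<^sub>v a + (adj U * W) *\<^sub>v z"
      using assoc_mult_mat_vec[OF adjc(2) G a] assoc_mult_mat_vec[OF adjc(2) W z] by simp
    also have "\<dots> = (adj U * W) *\<^sub>v z"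
    proof -
      have "0\<^sub>m p k *\<^sub>v a = 0\<^sub>v p" using a by (intro eq_vecI) auto
      moreover have "(adj U * W) *\<^sub>v z \<in> carrier_vec p" using UWc z by simp
      ultimately show ?thesis unfolding UG by simp
    qed
    finally have e: "adj U *\<^sub>v v = (adj U * W) *\<^sub>v z" .
    have "Z *\<^sub>v (adj U *\<^sub>v v) = (Z * (adj U * W)) *\<^sub>v z" unfolding e by (rule assoc_mult_mat_vec[symmetric, OF Zp(1) UWc z])
    hence e2: "Z *\<^sub>v (adj U *\<^sub>v v) = z" using Zp z by simp
    have "(G * adj K + W * (Z * adj U)) *\<^sub>v v = (G * adj K) *\<^sub>v v + (W * (Z * adj U)) *\<^sub>v v"
      by (rule add_mult_distrib_mat_vec[of _ N N]) (use v in \<open>auto intro!: carrier_matI simp: dims dims2 dims3\<close>)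
    also have "\<dots> = G *\<^sub>v a + W *\<^sub>v (Z *\<^sub>v (adj U *\<^sub>v v))" unfolding a_def
      using assoc_mult_mat_vec[OF G adjc(1) v] assoc_mult_mat_vec[OF W mult_carrier_mat[OF Zp(1) adjc(2)] v]
        assoc_mult_mat_vec[OF Zp(1) adjc(2) v] by simp
    also have "\<dots> = v" unfolding e2 a_def using vz by simp
    finally show "(G * adj K + W * (Z * adj U)) *\<^sub>v v = 1\<^sub>m N *\<^sub>v v" using v by simp
  qed
  have P2: "K * adj G + U * (Zp * adj W) = 1\<^sub>m N" using arg_cong[OF P1, of adj]
    by (simp add: adj_add adj_mult dims dims2 dims3 ZpZ mA)
  note nf = mA dL dR dmL dmR sL sR
  note alld = dims dims2 dims3
  define M where "M = H*Y*adj K + K*Y*adj H + Ct*adj Ct - K*Y*adj K*adj V*B*adj B*V*K*Y*adj K"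
  have Mc: "M \<in> carrier_mat N N" unfolding M_def by (intro carrier_matI) (simp_all add: alld)
  note dimsM = carrier_matD[OF Mc]
  have AVK': "adj A * (V * (K * X)) = V * (H * X)" if "dim_row X = k" for X
  proof -
    have "adj A * (V * (K * X)) = (adj A * V * K) * X" using that alld by (simp add: nf)
    also have "\<dots> = V * (H * X)" unfolding AVK using that alld by (simp add: nf)
    finally show ?thesis .
  qed
  have AVK2: "adj K * (adj V * A) = adj H * adj V"
  proof -
    have "adj (adj A * V * K) = adj (V * H)" unfolding AVK ..
    thus ?thesis using alld by (simp add: adj_mult nf)
  qed
  have Cd: "C = adj Ct * adj V" using arg_cong[OF CtV, of adj] alld by (simp add: adj_mult)
  have Res: "adj A * (V * K * Y * adj K * adj V) + (V * K * Y * adj K * adj V) * A + adj C * C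
      - (V * K * Y * adj K * adj V) * B * adj B * (V * K * Y * adj K * adj V) = V * M * adj V"
    unfolding M_def Cd using alld by (simp add: nf adj_mult AVK' AVK2)
  have e1: "adj H * L * inv_m (adj K * L) = adj H * G" unfolding G_def KlI_def[symmetric]
    using alld by (simp add: nf)
  have e2: "adj Ct * L * inv_m (adj K * L) = adj Ct * G" unfolding G_def KlI_def[symmetric]
    using alld by (simp add: nf)
  have GK': "adj G * (K * X) = X" if "dim_row X = k" for X
  proof -
    have "adj G * (K * X) = (adj G * K) * X" using that alld by (simp add: nf)
    thus ?thesis unfolding GK using that by simp
  qed
  have RicM: "adj G * M * G = 0\<^sub>m k k"
  proof -
    have "adj G * M * G = adj (adj H * G) * Y + Y * (adj H * G)
       + adj (adj Ct * G) * (adj Ct * G)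
       - Y * (adj K * adj V * B) * adj (adj K * adj V * B) * Y"
      unfolding M_def using alld by (simp add: nf adj_mult GK' KG)
    thus ?thesis using Ric unfolding e1 e2 by simp
  qed
  have Mh: "adj M = M" unfolding M_def using alld
    by (simp add: nf adj_mult adj_add adj_minus Yh aC)
  have RicM': "adj G * (M * (G * X)) = 0\<^sub>m k (dim_col X)" if "dim_row X = k" for X
  proof -
    have "adj G * (M * (G * X)) = (adj G * M * G) * X" using that alld dimsM by (simp add: nf)
    thus ?thesis unfolding RicM using that by simp
  qed
  define T' where "T' = K * (adj G * (M * (W * Z))) + (1/2) \<cdot>\<^sub>m (U * (Zp * (adj W * (M * (W * Z)))))"
  have MT: "M = T' * adj U + U * adj T'"
  proof -
    have "M = (K * adj G + U * (Zp * adj W)) * M * (G * adj K + W * (Z * adj U))"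
      unfolding P1 P2 using Mc by simp
    also have "\<dots> = U * (Zp * (adj W * (M * (G * adj K)))) + (K * (adj G * (M * (W * (Z * adj U))))
       + U * (Zp * (adj W * (M * (W * (Z * adj U))))))"
      using alld dimsM by (simp add: nf RicM')
    also have "\<dots> = K * (adj G * (M * (W * (Z * adj U)))) + (1/2) \<cdot>\<^sub>m (U * (Zp * (adj W * (M * (W * (Z * adj U))))))
       + (U * (Zp * (adj W * (M * (G * adj K)))) + (1/2) \<cdot>\<^sub>m (U * (Zp * (adj W * (M * (W * (Z * adj U)))))))"
      by (rule bac_half) (use alld dimsM in simp_all)
    also have "\<dots> = T' * adj U + U * adj T'"
      unfolding T'_def using alld dimsM by (simp add: nf adj_mult adj_add adj_smult Mh ZpZ ZZp)
    finally show ?thesis .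
  qed
  have KW': "adj K * (W * X) = 0\<^sub>m k (dim_col X)" if "dim_row X = p" for X
  proof -
    have "adj K * (W * X) = (adj K * W) * X" using that alld by (simp add: nf)
    thus ?thesis unfolding KW using that by simp
  qed
  have WK': "adj W * (K * X) = 0\<^sub>m p (dim_col X)" if "dim_row X = k" for X
  proof -
    have "adj W * (K * X) = (adj W * K) * X" using that alld by (simp add: nf)
    thus ?thesis unfolding WK using that by simp
  qed
  define Q where "Q = Ct * (adj Ct * (W * Z))"
  have Qc: "Q \<in> carrier_mat N p" unfolding Q_def by (intro carrier_matI) (simp_all add: alld)
  note dimsQ = carrier_matD[OF Qc]
  define t where "t = K * (Y * (adj H * (W * Z)))"
  define x where "x = K * (adj G * Q)"
  define y where "y = U * (Zp * (adj W * Q))"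
  have Teq: "K * Y * adj H * W * inv_m (adj U * W)
        + (Ct - (1/2::complex) \<cdot>\<^sub>m (U * inv_m (adj W * U) * adj W * Ct)) * adj Ct * W * inv_m (adj U * W)
        = t + (Q - (1/2) \<cdot>\<^sub>m y)"
    unfolding Z_def[symmetric] Zp_def[symmetric] t_def Q_def y_def using alld by (simp add: nf)
  have T'eq: "T' = t + x + (1/2) \<cdot>\<^sub>m y"
    unfolding T'_def M_def t_def x_def y_def Q_def using alld by (simp add: nf GK' KW' WK')
  have Qxy: "Q = x + y"
  proof -
    have "Q = (K * adj G + U * (Zp * adj W)) * Q" unfolding P2 using Qc by simp
    thus ?thesis unfolding x_def y_def using alld dimsQ by (simp add: nf)
  qed
  have TT: "K * Y * adj H * W * inv_m (adj U * W)
        + (Ct - (1/2::complex) \<cdot>\<^sub>m (U * inv_m (adj W * U) * adj W * Ct)) * adj Ct * W * inv_m (adj U * W) = T'"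
    unfolding Teq T'eq by (rule txy_half[OF _ _ _ _ Qxy]) (use alld dimsQ in \<open>simp_all add: t_def x_def y_def\<close>)
  have T'c: "T' \<in> carrier_mat N p" unfolding T'_def by (intro carrier_matI) (simp_all add: alld dimsM)
  show ?thesis
    unfolding TT Res using WUi MT aC[of "U * adj T'" "T' * adj U"] by (simp add: carrier_matD[OF T'c] dims)
qed

theorem mainTheorem1:
  fixes n m p j :: nat
    and A B C V K H Ct L Y U W :: "complex mat"
  assumes dimA: "A \<in> carrier_mat n n" and dimB: "B \<in> carrier_mat n m"
    and dimC: "C \<in> carrier_mat p n" and j1: "j \<ge> 1"
    and brad: "is_BRAD n p j A C V K H"
    and Krank: "mrank K = j*p"
    and dimCt: "Ct \<in> carrier_mat ((j+1)*p) p" and CtV: "adj C = V * Ct"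
    and dimL: "L \<in> carrier_mat ((j+1)*p) (j*p)" and Linv: "invertible_mat (adj L * K)"
    and Aj_def: "Aj = adj H * L * inv_m (adj K * L)"
    and Bj_def: "Bj = adj K * adj V * B"
    and Cj_def: "Cj = adj Ct * L * inv_m (adj K * L)"
    and dimY: "Y \<in> carrier_mat (j*p) (j*p)" and Yherm: "adj Y = Y"
    and Ric: "adj Aj * Y + Y * Aj + adj Cj * Cj - Y * Bj * adj Bj * Y = 0\<^sub>m (j*p) (j*p)"
    and Xj_def: "Xj = V * K * Y * adj K * adj V"
    and dimU: "U \<in> carrier_mat ((j+1)*p) p"
    and U_basis: "cols_basis_of U (ortho_compl ((j+1)*p) (col_space L))"
    and dimW: "W \<in> carrier_mat ((j+1)*p) p"
    and W_basis: "cols_basis_of W (ortho_compl ((j+1)*p) (col_space K))"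
    and T_def: "T = K * Y * adj H * W * inv_m (adj U * W)
        + (Ct - (1/2::complex) \<cdot>\<^sub>m (U * inv_m (adj W * U) * adj W * Ct)) * adj Ct * W * inv_m (adj U * W)"
    and Res_def: "Res = adj A * Xj + Xj * A + adj C * C - Xj * B * adj B * Xj"
  shows "invertible_mat (adj W * U) \<and>
    (\<forall>Q R. Q \<in> carrier_mat ((j+1)*p) (2*p) \<and> orthonormal_cols Q \<and>
        R \<in> carrier_mat (2*p) (2*p) \<and> upper_triangular R \<and> hcat U T = Q * R \<longrightarrow>
      Res = V * (U * adj T + T * adj U) * adj V \<and>
      mrank Res \<le> 2*p \<and>
      (\<forall>N. unitarily_invariant_norm N \<longrightarrow>
         N Res = N (R * four_block_mat (0\<^sub>m p p) (1\<^sub>m p) (1\<^sub>m p) (0\<^sub>m p p) * adj R)))"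
  proof -
  have V: "V \<in> carrier_mat n ((j+1)*p)" and K: "K \<in> carrier_mat ((j+1)*p) (j*p)"
    and H: "H \<in> carrier_mat ((j+1)*p) (j*p)" and AVK: "adj A * V * K = V * H"
    and Vo': "orthonormal_cols V"
    using brad unfolding is_BRAD_def by auto
  have Vo: "adj V * V = 1\<^sub>m ((j+1)*p)" using Vo' V unfolding orthonormal_cols_def by simp
  have Ric': "adj (adj H * L * inv_m (adj K * L)) * Y + Y * (adj H * L * inv_m (adj K * L))
       + adj (adj Ct * L * inv_m (adj K * L)) * (adj Ct * L * inv_m (adj K * L))
       - Y * (adj K * adj V * B) * adj (adj K * adj V * B) * Y = 0\<^sub>m (j*p) (j*p)"
    using Ric unfolding Aj_def Bj_def Cj_def .
  note cr = core[OF dimA dimB dimC V K H AVK Vo dimCt CtV dimL Linv dimY Yherm Ric' dimU U_basis dimW W_basis]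
  have WUi: "invertible_mat (adj W * U)" using cr by simp
  have ResE: "Res = V * (U * adj T + T * adj U) * adj V"
    unfolding Res_def Xj_def T_def using cr by simp
  have WUc: "adj W * U \<in> carrier_mat p p"
    by (intro carrier_matI) (simp_all add: carrier_matD[OF dimU] carrier_matD[OF dimW])
  have UWc: "adj U * W \<in> carrier_mat p p"
    by (intro carrier_matI) (simp_all add: carrier_matD[OF dimU] carrier_matD[OF dimW])
  have UWi: "invertible_mat (adj U * W)" using adj_inv(1)[OF WUc WUi]
    by (simp add: adj_mult carrier_matD[OF dimU] carrier_matD[OF dimW])
  have Tc: "T \<in> carrier_mat ((j+1)*p) p" unfolding T_def
    by (intro carrier_matI) (simp_all add: carrier_matD[OF dimA] carrier_matD[OF dimB] carrier_matD[OF dimC]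
      carrier_matD[OF V] carrier_matD[OF K] carrier_matD[OF H] carrier_matD[OF dimCt] carrier_matD[OF dimL]
      carrier_matD[OF dimY] carrier_matD[OF dimU] carrier_matD[OF dimW]
      carrier_matD[OF inv_props(1)[OF WUc WUi]] carrier_matD[OF inv_props(1)[OF UWc UWi]])
  show ?thesis
  proof (intro conjI allI impI WUi)
    fix Q R assume QR: "Q \<in> carrier_mat ((j+1)*p) (2*p) \<and> orthonormal_cols Q \<and>
        R \<in> carrier_mat (2*p) (2*p) \<and> upper_triangular R \<and> hcat U T = Q * R"
    hence Q: "Q \<in> carrier_mat ((j+1)*p) (2*p)" and R: "R \<in> carrier_mat (2*p) (2*p)"
      and Qo: "adj Q * Q = 1\<^sub>m (2*p)" and HQR: "hcat U T = Q * R"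
      unfolding orthonormal_cols_def by auto
    define J where "J = four_block_mat (0\<^sub>m p p) (1\<^sub>m p) (1\<^sub>m p) (0\<^sub>m p p :: complex mat)"
    have Jc: "J \<in> carrier_mat (2*p) (2*p)" unfolding J_def by (intro carrier_matI) (simp_all add: mult_2)
    define E where "E = V * Q"
    define M2 where "M2 = R * J * adj R"
    have Ec: "E \<in> carrier_mat n (2*p)" unfolding E_def by (rule mult_carrier_mat[OF V Q])
    have M2c: "M2 \<in> carrier_mat (2*p) (2*p)" unfolding M2_def using R Jc by (intro mult_carrier_mat) auto
    have EE: "adj E * E = 1\<^sub>m (2*p)"
    proof -
      have "adj E * E = adj Q * (adj V * V) * Q" unfolding E_def using V Q
        by (simp add: adj_mult mA carrier_matD[OF V] carrier_matD[OF Q])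
      thus ?thesis unfolding Vo using Q Qo by simp
    qed
    have "U * adj T + T * adj U = hcat U T * J * adj (hcat U T)"
      unfolding J_def by (rule hcat_J[OF dimU Tc, symmetric])
    also have "\<dots> = Q * R * J * adj (Q * R)" unfolding HQR ..
    finally have UT: "U * adj T + T * adj U = Q * R * J * adj (Q * R)" .
    have ResM: "Res = E * M2 * adj E" unfolding ResE UT E_def M2_def
      by (simp add: adj_mult mA carrier_matD[OF V] carrier_matD[OF Q] carrier_matD[OF R] carrier_matD[OF Jc])
    show "Res = V * (U * adj T + T * adj U) * adj V" by (rule ResE)
    show "mrank Res \<le> 2 * p"
    proof -
      have "Res = E * (M2 * adj E)" unfolding ResM by (simp add: mA carrier_matD[OF Ec] carrier_matD[OF M2c])
      moreover have "M2 * adj E \<in> carrier_mat (2*p) n" using M2c Ec by (intro mult_carrier_mat) auto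
      ultimately show ?thesis using mrank_mult_le[OF Ec] by simp
    qed
    fix NN assume NN: "unitarily_invariant_norm NN"
    show "NN Res = NN (R * four_block_mat (0\<^sub>m p p) (1\<^sub>m p) (1\<^sub>m p) (0\<^sub>m p p) * adj R)"
      unfolding J_def[symmetric] M2_def[symmetric] ResM by (rule norm_iso[OF NN Ec EE M2c])
  qed
qed

end
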